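(* Let $0<\delta<2$ and let $\xi$ satisfy $-1<\xi\le 0$ and $(1+\xi)\sqrt{h(\delta)}-\xi(1+\delta\sqrt{\mu_2})<1$. Let $\{x_k\},\{z_k\}$ be generated by the GSKM method (defined in the context) from $x_0$. Define $\Pi_1=\sqrt{h(\delta)}$, $\Pi_2=|\xi|$, $\Pi_3=\delta\sqrt{\mu_2h(\delta)}$, $\Pi_4=|\xi|(1+\delta\sqrt{\mu_2})$, $D=(\Pi_1-\Pi_4)^2+4\Pi_2\Pi_3$, $\Gamma_1=\frac{\Pi_1-\Pi_4+\sqrt D}{2\Pi_3}$, $\Gamma_2=\frac{\Pi_1-\Pi_4-\sqrt D}{2\Pi_3}$, $\Gamma_3=\frac{\Pi_3}{\sqrt D}$, $\rho_1=\frac12(\Pi_1+\Pi_4-\sqrt D)$, $\rho_2=\frac12(\Pi_1+\Pi_4+\sqrt D)$. Then $\{x_k\}$ converges and, for all $k\ge1$, $\mathbb{E}[d(x_{k+1},P)]\le(-\Gamma_2\Gamma_3\rho_1^k+\Gamma_1\Gamma_3\rho_2^k)\,d(x_0,P)$ and $\mathbb{E}[\|z_{k+1}-z_k\|]\le(-\Gamma_3\rho_1^k+\Gamma_3\rho_2^k)\,d(x_0,P)$, where $\Gamma_1,\Gamma_3\ge0$ and $0\le\rho_1\le\rho_2<1$.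
   Context: Let $A\in\mathbb{R}^{m\times n}$ have rows $a_1^T,\dots,a_m^T$ with $\|a_i\|_2=1$ for all $i$, and $b\in\mathbb{R}^m$; assume $Ax\le b$ is consistent and let $P=\{x: Ax\le b\}$. $\mathcal{P}(x)$ is the Euclidean projection onto $P$ and $d(x,P)=\|x-\mathcal{P}(x)\|$. $t^+=\max\{t,0\}$. Fix an integer $1\le\beta\le m$. Let $L>0$ be a Hoffman constant: $d(x,P)^2\le L^2\|(Ax-b)^+\|^2$ for all $x$. Set $\mu_1=\frac{1}{mL^2}$, $\mu_2=\min\{1,\frac{\beta}{m}\lambda_{\max}(A^TA)\}$, $\eta=2\delta-\delta^2$, $h(\delta)=1-\eta\mu_1$. GSKM method (parameters $\beta,\delta,\xi$): given $x_0$, set $x_1=x_0$. For $k=1,2,\dots$, choose $\tau_k\subseteq\{1,\dots,m\}$ of size $\beta$ uniformly at random (independently of the past), let $i^*_k\in\tau_k$ maximize $(a_i^Tx_k-b_i)^+$ over $i\in\tau_k$, set $z_k=x_k-\delta(a_{i^*_k}^Tx_k-b_{i^*_k})^+a_{i^*_k}$ and $x_{k+1}=(1-\xi)z_k+\xi z_{k-1}$, with the convention $z_0=z_1$. $\mathbb{E}$ denotes total expectation. *)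

theory Defs
  imports "HOL-Probability.Probability"
begin

definition pos_part_vec :: "real ^ 'm \<Rightarrow> real ^ 'm" where
  "pos_part_vec v = (\<chi> i. max (v $ i) 0)"

definition lambda_max :: "real ^ 'n ^ 'n \<Rightarrow> real" where
  "lambda_max M = Max {c. \<exists>v. v \<noteq> 0 \<and> M *v v = c *\<^sub>R v}"

definition subsets_of_size :: "nat \<Rightarrow> 'm set set" where
  "subsets_of_size beta = {S. card S = beta}"

text \<open>Sample space: i.i.d. uniformly chosen subsets tau_1, tau_2, ... (coordinate k is tau_k;
  coordinate 0 is unused).\<close>
definition gskm_space :: "nat \<Rightarrow> (nat \<Rightarrow> ('m::finite) set) measure" where
  "gskm_space beta = PiM UNIV (\<lambda>_. measure_pmf (pmf_of_set (subsets_of_size beta)))"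

definition gskm_step ::
  "real ^ 'n ^ 'm \<Rightarrow> real ^ 'm \<Rightarrow> real \<Rightarrow> (real ^ 'n \<Rightarrow> 'm set \<Rightarrow> 'm)
   \<Rightarrow> real ^ 'n \<Rightarrow> 'm set \<Rightarrow> real ^ 'n" where
  "gskm_step A b \<delta> sel x \<tau> =
     (let i = sel x \<tau> in x - (\<delta> * max ((A $ i) \<bullet> x - b $ i) 0) *\<^sub>R (A $ i))"

text \<open>gskm_pair A b delta xi sel x0 k omega = (x_(k+1), z_k).\<close>
primrec gskm_pair ::
  "real ^ 'n ^ 'm \<Rightarrow> real ^ 'm \<Rightarrow> real \<Rightarrow> real \<Rightarrow> (real ^ 'n \<Rightarrow> 'm set \<Rightarrow> 'm)
   \<Rightarrow> real ^ 'n \<Rightarrow> nat \<Rightarrow> (nat \<Rightarrow> 'm set) \<Rightarrow> (real ^ 'n) \<times> (real ^ 'n)" where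
  "gskm_pair A b \<delta> \<xi> sel x0 0 \<omega> = (x0, gskm_step A b \<delta> sel x0 (\<omega> 1))"
| "gskm_pair A b \<delta> \<xi> sel x0 (Suc k) \<omega> =
     (let xk = fst (gskm_pair A b \<delta> \<xi> sel x0 k \<omega>);
          zprev = snd (gskm_pair A b \<delta> \<xi> sel x0 k \<omega>);
          znew = gskm_step A b \<delta> sel xk (\<omega> (Suc k))
      in ((1 - \<xi>) *\<^sub>R znew + \<xi> *\<^sub>R zprev, znew))"

text \<open>Iterates x_k (with x_1 = x_0) and z_k (with z_0 = z_1).\<close>
definition gskm_x where
  "gskm_x A b \<delta> \<xi> sel x0 k \<omega> = (if k = 0 then x0 else fst (gskm_pair A b \<delta> \<xi> sel x0 (k - 1) \<omega>))"

definition gskm_z where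
  "gskm_z A b \<delta> \<xi> sel x0 k \<omega> = snd (gskm_pair A b \<delta> \<xi> sel x0 k \<omega>)"

end

theory Submission
  imports Defs
begin


definition fdep :: "nat \<Rightarrow> ((nat \<Rightarrow> 'a) \<Rightarrow> 'b) \<Rightarrow> bool" where
  "fdep n f \<longleftrightarrow> (\<forall>\<omega> \<omega>'. (\<forall>i<n. \<omega> i = \<omega>' i) \<longrightarrow> f \<omega> = f \<omega>')"

lemma fdep_mono: "fdep n f \<Longrightarrow> n \<le> n' \<Longrightarrow> fdep n' f"
  unfolding fdep_def by auto

lemma fdep_restrict: "fdep n f \<Longrightarrow> f (restrict \<omega> {..<n}) = f \<omega>"
  unfolding fdep_def by auto

lemma sets_PiM_fin:
  fixes p :: "'a::countable pmf" and n :: nat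
  shows "sets (PiM {..<n} (\<lambda>_. measure_pmf p)) = sets (count_space (PiE {..<n} (\<lambda>_. UNIV)))"
proof -
  have "sets (PiM {..<n} (\<lambda>_. measure_pmf p)) = sets (PiM {..<n} (\<lambda>_. count_space (UNIV::'a set)))"
    by (rule sets_PiM_cong) auto
  also have "PiM {..<n} (\<lambda>_. count_space (UNIV::'a set)) = count_space (PiE {..<n} (\<lambda>_. UNIV))"
    by (rule count_space_PiM_finite) auto
  finally show ?thesis .
qed

lemma meas_PiM_fin:
  fixes p :: "'a::countable pmf" and f :: "(nat \<Rightarrow> 'a) \<Rightarrow> real" and n :: nat
  shows "f \<in> borel_measurable (PiM {..<n} (\<lambda>_. measure_pmf p))"
  by (subst measurable_cong_sets[OF sets_PiM_fin refl]) simp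

lemma fdep_meas:
  fixes p :: "'a::countable pmf" and f :: "(nat \<Rightarrow> 'a) \<Rightarrow> real"
  assumes "fdep n f"
  shows "f \<in> borel_measurable (PiM UNIV (\<lambda>_. measure_pmf p))"
proof -
  have "(\<lambda>\<omega>. f (restrict \<omega> {..<n})) \<in> borel_measurable (PiM UNIV (\<lambda>_. measure_pmf p))"
    by (rule measurable_comp[OF measurable_restrict_subset meas_PiM_fin, unfolded comp_def]) auto
  then show ?thesis using fdep_restrict[OF assms] by simp
qed

lemma fdep_bounded:
  fixes f :: "(nat \<Rightarrow> 'a::finite) \<Rightarrow> real"
  assumes "fdep n f"
  shows "\<exists>B. \<forall>\<omega>. \<bar>f \<omega>\<bar> \<le> B"
proof -
  have "range f \<subseteq> f ` PiE {..<n} (\<lambda>_. UNIV)"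
  proof
    fix y assume "y \<in> range f"
    then obtain \<omega> where "y = f \<omega>" by auto
    then have "y = f (restrict \<omega> {..<n})" using fdep_restrict[OF assms] by simp
    then show "y \<in> f ` PiE {..<n} (\<lambda>_. UNIV)" by auto
  qed
  moreover have "finite (f ` PiE {..<n} (\<lambda>_. (UNIV::'a set)))"
    by (intro finite_imageI finite_PiE) auto
  ultimately have "finite (range f)" by (rule finite_subset)
  then have "bounded (range f)" by (rule finite_imp_bounded)
  then obtain B where "\<forall>y\<in>range f. norm y \<le> B" by (auto simp: bounded_iff)
  then show ?thesis by auto
qed

lemma fdep_integrable:
  fixes p :: "'a::finite pmf" and f :: "(nat \<Rightarrow> 'a) \<Rightarrow> real"
  assumes "fdep n f" and meas: "f \<in> borel_measurable (PiM I (\<lambda>_. measure_pmf p))"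
  shows "integrable (PiM I (\<lambda>_. measure_pmf p)) f"
proof -
  interpret prob_space "PiM I (\<lambda>_. measure_pmf p)"
    by (rule prob_space_PiM) (rule prob_space_measure_pmf)
  obtain B where B: "\<forall>\<omega>. \<bar>f \<omega>\<bar> \<le> B" using fdep_bounded[OF assms(1)] by blast
  show ?thesis
    by (rule integrable_const_bound[where B=B]) (use B meas in auto)
qed

lemma fdep_integrable_UNIV:
  fixes p :: "'a::finite pmf" and f :: "(nat \<Rightarrow> 'a) \<Rightarrow> real"
  assumes "fdep n f"
  shows "integrable (PiM UNIV (\<lambda>_. measure_pmf p)) f"
  using fdep_integrable[OF assms fdep_meas[OF assms]] .

lemma fdep_integrable_fin:
  fixes p :: "'a::finite pmf" and f :: "(nat \<Rightarrow> 'a) \<Rightarrow> real"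
  assumes "fdep n f"
  shows "integrable (PiM {..<k} (\<lambda>_. measure_pmf p)) f"
  using fdep_integrable[OF assms meas_PiM_fin] .

lemma fdep_integral:
  fixes p :: "'a::finite pmf" and f :: "(nat \<Rightarrow> 'a) \<Rightarrow> real"
  assumes "fdep n f"
  shows "(\<integral>\<omega>. f \<omega> \<partial>PiM UNIV (\<lambda>_. measure_pmf p)) = (\<integral>\<omega>. f \<omega> \<partial>PiM {..<n} (\<lambda>_. measure_pmf p))"
proof -
  interpret product_prob_space "\<lambda>_. measure_pmf p" UNIV
    by unfold_locales
  have "(\<integral>\<omega>. f \<omega> \<partial>PiM {..<n} (\<lambda>_. measure_pmf p))
      = (\<integral>\<omega>. f \<omega> \<partial>distr (PiM UNIV (\<lambda>_. measure_pmf p)) (PiM {..<n} (\<lambda>_. measure_pmf p)) (\<lambda>x. restrict x {..<n}))"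
    by (subst distr_PiM_restrict_finite) auto
  also have "\<dots> = (\<integral>\<omega>. f (restrict \<omega> {..<n}) \<partial>PiM UNIV (\<lambda>_. measure_pmf p))"
    by (rule integral_distr[OF measurable_restrict_subset meas_PiM_fin]) auto
  also have "\<dots> = (\<integral>\<omega>. f \<omega> \<partial>PiM UNIV (\<lambda>_. measure_pmf p))"
    using fdep_restrict[OF assms] by simp
  finally show ?thesis by simp
qed

lemma indep_step:
  fixes p :: "'a::finite pmf" and X :: "(nat \<Rightarrow> 'a) \<Rightarrow> 'b" and \<phi> :: "'b \<Rightarrow> 'a \<Rightarrow> real"
  assumes X: "fdep k X"
  shows "(\<integral>\<omega>. \<phi> (X \<omega>) (\<omega> k) \<partial>PiM UNIV (\<lambda>_. measure_pmf p))
       = (\<integral>\<omega>. (\<integral>\<tau>. \<phi> (X \<omega>) \<tau> \<partial>measure_pmf p) \<partial>PiM UNIV (\<lambda>_. measure_pmf p))"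
proof -
  interpret product_prob_space "\<lambda>_. measure_pmf p" UNIV
    by unfold_locales
  have f1: "fdep (Suc k) (\<lambda>\<omega>. \<phi> (X \<omega>) (\<omega> k))"
    using X unfolding fdep_def by (metis less_Suc_eq)
  have f2: "fdep k (\<lambda>\<omega>. (\<integral>\<tau>. \<phi> (X \<omega>) \<tau> \<partial>measure_pmf p))"
    using X unfolding fdep_def by metis
  have "(\<integral>\<omega>. \<phi> (X \<omega>) (\<omega> k) \<partial>PiM UNIV (\<lambda>_. measure_pmf p))
      = (\<integral>\<omega>. \<phi> (X \<omega>) (\<omega> k) \<partial>PiM (insert k {..<k}) (\<lambda>_. measure_pmf p))"
    using fdep_integral[OF f1] lessThan_Suc by simp
  also have "\<dots> = (\<integral>x. (\<integral>y. \<phi> (X (x(k:=y))) y \<partial>measure_pmf p) \<partial>PiM {..<k} (\<lambda>_. measure_pmf p))"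
    using fdep_integrable_fin[OF f1, where k="Suc k"] by (subst product_integral_insert) (auto simp: lessThan_Suc)
  also have "\<dots> = (\<integral>x. (\<integral>y. \<phi> (X x) y \<partial>measure_pmf p) \<partial>PiM {..<k} (\<lambda>_. measure_pmf p))"
  proof -
    have "\<And>x y. X (x(k:=y)) = X x" using X unfolding fdep_def by auto
    then show ?thesis by simp
  qed
  also have "\<dots> = (\<integral>\<omega>. (\<integral>\<tau>. \<phi> (X \<omega>) \<tau> \<partial>measure_pmf p) \<partial>PiM UNIV (\<lambda>_. measure_pmf p))"
    using fdep_integral[OF f2] by simp
  finally show ?thesis .
qed

lemma card_subsets_containing:
  fixes i :: "'m::finite"
  assumes "1 \<le> k"
  shows "card {S::'m set. card S = k \<and> i \<in> S} = (CARD('m) - 1) choose (k - 1)"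
proof -
  have eq: "{S::'m set. card S = k \<and> i \<in> S} = insert i ` {T. T \<subseteq> -{i} \<and> card T = k - 1}"
  proof (intro set_eqI iffI)
    fix S assume "S \<in> {S::'m set. card S = k \<and> i \<in> S}"
    then have S: "card S = k" "i \<in> S" by auto
    then have "S = insert i (S - {i})" "S - {i} \<subseteq> -{i}" "card (S - {i}) = k - 1" by auto
    then show "S \<in> insert i ` {T. T \<subseteq> -{i} \<and> card T = k - 1}" by blast
  next
    fix S assume "S \<in> insert i ` {T. T \<subseteq> -{i} \<and> card T = k - 1}"
    then obtain T where T: "S = insert i T" "T \<subseteq> -{i}" "card T = k - 1" by auto
    then have "i \<notin> T" by auto
    then have "card S = Suc (k - 1)" using T by simp
    then show "S \<in> {S::'m set. card S = k \<and> i \<in> S}" using assms T by auto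
  qed
  have inj: "inj_on (insert i) {T. T \<subseteq> -{i} \<and> card T = k - 1}"
    by (rule inj_onI) auto
  have "card {S::'m set. card S = k \<and> i \<in> S} = card {T. T \<subseteq> -{i} \<and> card T = k - 1}"
    unfolding eq by (rule card_image[OF inj])
  also have "\<dots> = card (-{i::'m}) choose (k - 1)" by (rule n_subsets) simp
  also have "card (-{i::'m}) = CARD('m) - 1"
    by (simp add: Compl_eq_Diff_UNIV card_Diff_singleton)
  finally show ?thesis .
qed

lemma card_subsets_of_size:
  "card (subsets_of_size k :: 'm::finite set set) = CARD('m) choose k"
proof -
  have "card {B::'m set. B \<subseteq> UNIV \<and> card B = k} = CARD('m) choose k" by (rule n_subsets) simp
  then show ?thesis unfolding subsets_of_size_def by simp
qed

lemma subsets_of_size_nonempty: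
  assumes "k \<le> CARD('m::finite)"
  shows "subsets_of_size k \<noteq> ({} :: 'm set set)"
proof -
  obtain T :: "'m set" where "card T = k" using obtain_subset_with_card_n[OF assms] by metis
  then show ?thesis unfolding subsets_of_size_def by auto
qed

lemma avg_sum:
  fixes g :: "'m::finite \<Rightarrow> real"
  assumes "1 \<le> k" "k \<le> CARD('m)"
  shows "(\<integral>\<tau>. (\<Sum>i\<in>\<tau>. g i) \<partial>measure_pmf (pmf_of_set (subsets_of_size k)))
       = real k / real CARD('m) * (\<Sum>i\<in>UNIV. g i)"
proof -
  let ?S = "subsets_of_size k :: 'm set set"
  have ne: "?S \<noteq> {}" using subsets_of_size_nonempty[OF assms(2)] .
  have fin: "finite ?S" by simp
  have "(\<Sum>\<tau>\<in>?S. (\<Sum>i\<in>\<tau>. g i)) = (\<Sum>\<tau>\<in>?S. (\<Sum>i\<in>UNIV. if i \<in> \<tau> then g i else 0))"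
    by (rule sum.cong[OF refl]) (simp add: sum.If_cases)
  also have "\<dots> = (\<Sum>i\<in>UNIV. (\<Sum>\<tau>\<in>?S. if i \<in> \<tau> then g i else 0))"
    by (rule sum.swap)
  also have "\<dots> = (\<Sum>i\<in>UNIV. g i * real ((CARD('m) - 1) choose (k - 1)))"
  proof (intro sum.cong refl)
    fix i :: 'm
    have "(\<Sum>\<tau>\<in>?S. if i \<in> \<tau> then g i else 0) = (\<Sum>\<tau>\<in>{\<tau>\<in>?S. i \<in> \<tau>}. g i)"
      by (simp add: sum.If_cases fin Int_def)
    also have "{\<tau>\<in>?S. i \<in> \<tau>} = {S::'m set. card S = k \<and> i \<in> S}"
      unfolding subsets_of_size_def by auto
    finally show "(\<Sum>\<tau>\<in>?S. if i \<in> \<tau> then g i else 0) = g i * real ((CARD('m) - 1) choose (k - 1))"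
      using card_subsets_containing[OF assms(1), of i] by simp
  qed
  also have "\<dots> = (\<Sum>i\<in>UNIV. g i) * real ((CARD('m) - 1) choose (k - 1))"
    by (simp add: sum_distrib_right)
  finally have s: "(\<Sum>\<tau>\<in>?S. (\<Sum>i\<in>\<tau>. g i)) = (\<Sum>i\<in>UNIV. g i) * real ((CARD('m) - 1) choose (k - 1))" .
  have c: "real k * real (CARD('m) choose k) = real CARD('m) * real ((CARD('m) - 1) choose (k - 1))"
    using times_binomial_minus1_eq[of k "CARD('m)"] assms(1) by (metis of_nat_mult less_le_trans zero_less_one)
  have cpos: "real (CARD('m) choose k) > 0" using assms(2) by simp
  have mpos: "real CARD('m) > 0" by simp
  have "(\<integral>\<tau>. (\<Sum>i\<in>\<tau>. g i) \<partial>measure_pmf (pmf_of_set ?S)) = (\<Sum>\<tau>\<in>?S. (\<Sum>i\<in>\<tau>. g i)) / real (card ?S)"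
    by (rule integral_pmf_of_set[OF ne fin])
  also have "\<dots> = (\<Sum>i\<in>UNIV. g i) * real ((CARD('m) - 1) choose (k - 1)) / real (CARD('m) choose k)"
    by (simp add: s card_subsets_of_size)
  also have "\<dots> = real k / real CARD('m) * (\<Sum>i\<in>UNIV. g i)"
    using c cpos mpos by (simp add: field_simps)
  finally show ?thesis .
qed

lemma quad_zero:
  fixes g c :: real
  assumes "\<forall>t. 2 * t * g + t\<^sup>2 * c \<le> 0"
  shows "g = 0"
proof -
  define t where "t = g / (\<bar>c\<bar> + 1)"
  have pos: "\<bar>c\<bar> + 1 > 0" by simp
  have "2 * t * g + t\<^sup>2 * c \<le> 0" using assms by simp
  then have "(2 * t * g + t\<^sup>2 * c) * (\<bar>c\<bar> + 1)\<^sup>2 \<le> 0"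
    by (simp add: mult_nonpos_nonneg)
  also have "(2 * t * g + t\<^sup>2 * c) * (\<bar>c\<bar> + 1)\<^sup>2 = 2 * g * (t * (\<bar>c\<bar> + 1)) * (\<bar>c\<bar> + 1) + c * (t * (\<bar>c\<bar> + 1))\<^sup>2"
    by (simp add: power2_eq_square algebra_simps)
  also have "t * (\<bar>c\<bar> + 1) = g" unfolding t_def using pos by simp
  also have "2 * g * g * (\<bar>c\<bar> + 1) + c * g\<^sup>2 = g\<^sup>2 * (2 * (\<bar>c\<bar> + 1) + c)"
    by (simp add: power2_eq_square algebra_simps)
  finally have "g\<^sup>2 * (2 * (\<bar>c\<bar> + 1) + c) \<le> 0" .
  moreover have "2 * (\<bar>c\<bar> + 1) + c > 0" by (cases "c \<ge> 0") auto
  ultimately have "g\<^sup>2 \<le> 0" by (simp add: mult_le_0_iff)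
  then show ?thesis by simp
qed

lemma norm_sq_add_scale:
  fixes a b :: "'a::real_inner"
  shows "(norm (a + t *\<^sub>R b))\<^sup>2 = (norm a)\<^sup>2 + 2 * t * (a \<bullet> b) + t\<^sup>2 * (norm b)\<^sup>2"
  unfolding power2_norm_eq_inner
  by (simp add: inner_add_left inner_add_right inner_commute power2_eq_square algebra_simps)

lemma AtA_inner:
  fixes A :: "real ^ 'n ^ 'm"
  shows "((transpose A ** A) *v v) \<bullet> w = (A *v v) \<bullet> (A *v w)"
proof -
  have "(transpose A ** A) *v v = (A *v v) v* A"
    by (simp add: matrix_vector_mul_assoc[symmetric])
  then show ?thesis by (simp add: dot_lmul_matrix)
qed

lemma lambda_max_bound:
  fixes A :: "real ^ 'n ^ 'm"
  assumes rows: "\<forall>i. norm (A $ i) = 1"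
  shows "lambda_max (transpose A ** A) \<ge> 1 \<and>
         (\<forall>v. (norm (A *v v))\<^sup>2 \<le> lambda_max (transpose A ** A) * (norm v)\<^sup>2)"
proof -
  let ?M = "transpose A ** A"
  let ?E = "{c. \<exists>v. v \<noteq> 0 \<and> ?M *v v = c *\<^sub>R v}"
  define f where "f v = (norm (A *v v))\<^sup>2" for v :: "real ^ 'n"
  obtain j :: 'n where True by blast
  have sne: "sphere (0::real^'n) 1 \<noteq> {}"
  proof -
    have "axis j 1 \<in> sphere (0::real^'n) 1" by simp
    then show ?thesis by blast
  qed
  have cont: "continuous_on (sphere 0 1) f"
    unfolding f_def by (intro continuous_intros)
  obtain v0 where v0: "v0 \<in> sphere 0 1" and vmax: "\<forall>y\<in>sphere 0 1. f y \<le> f v0"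
    using continuous_attains_sup[OF compact_sphere sne cont] by blast
  define l0 where "l0 = f v0"
  have nv0: "norm v0 = 1" using v0 by simp
  have bound: "(norm (A *v u))\<^sup>2 \<le> l0 * (norm u)\<^sup>2" for u
  proof (cases "u = 0")
    case True then show ?thesis by simp
  next
    case False
    then have nu: "norm u > 0" by simp
    have "(1 / norm u) *\<^sub>R u \<in> sphere 0 1" using nu by simp
    then have "f ((1 / norm u) *\<^sub>R u) \<le> l0" using vmax l0_def by blast
    then have "(norm (A *v u))\<^sup>2 / (norm u)\<^sup>2 \<le> l0"
      unfolding f_def using nu by (simp add: matrix_vector_mult_scaleR power_divide)
    then show ?thesis using nu by (simp add: divide_le_eq mult.commute)
  qed
  have l0nn: "l0 \<ge> 0" unfolding l0_def f_def by simp
  have eig_inner: "(A *v v0) \<bullet> (A *v w) = l0 * (v0 \<bullet> w)" for w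
  proof -
    let ?g = "(A *v v0) \<bullet> (A *v w) - l0 * (v0 \<bullet> w)"
    let ?c = "(norm (A *v w))\<^sup>2 - l0 * (norm w)\<^sup>2"
    have "2 * t * ?g + t\<^sup>2 * ?c \<le> 0" for t
    proof -
      have b: "(norm (A *v (v0 + t *\<^sub>R w)))\<^sup>2 \<le> l0 * (norm (v0 + t *\<^sub>R w))\<^sup>2" by (rule bound)
      have e1: "(norm (A *v (v0 + t *\<^sub>R w)))\<^sup>2 = (norm (A *v v0))\<^sup>2 + 2 * t * ((A *v v0) \<bullet> (A *v w)) + t\<^sup>2 * (norm (A *v w))\<^sup>2"
        by (simp add: matrix_vector_right_distrib matrix_vector_mult_scaleR norm_sq_add_scale)
      have e2: "(norm (v0 + t *\<^sub>R w))\<^sup>2 = (norm v0)\<^sup>2 + 2 * t * (v0 \<bullet> w) + t\<^sup>2 * (norm w)\<^sup>2"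
        by (rule norm_sq_add_scale)
      have e3: "(norm (A *v v0))\<^sup>2 = l0" unfolding l0_def f_def ..
      show ?thesis using b e1 e2 e3 nv0 by (simp add: algebra_simps)
    qed
    then have "?g = 0" by (intro quad_zero) auto
    then show ?thesis by simp
  qed
  have Mv0: "?M *v v0 = l0 *\<^sub>R v0"
  proof -
    let ?d = "?M *v v0 - l0 *\<^sub>R v0"
    have "?d \<bullet> ?d = 0"
      using eig_inner[of ?d] by (simp add: inner_diff_left AtA_inner)
    then show ?thesis by simp
  qed
  have v0nz: "v0 \<noteq> 0" using nv0 by auto
  have l0E: "l0 \<in> ?E" using Mv0 v0nz by blast
  have finE: "finite ?E"
  proof -
    define ev where "ev c = (SOME v. v \<noteq> 0 \<and> ?M *v v = c *\<^sub>R v)" for c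
    have ev: "ev c \<noteq> 0 \<and> ?M *v ev c = c *\<^sub>R ev c" if "c \<in> ?E" for c
    proof -
      from that obtain v where "v \<noteq> 0 \<and> ?M *v v = c *\<^sub>R v" by blast
      then show ?thesis unfolding ev_def by (rule someI)
    qed
    have inj: "inj_on ev ?E"
    proof (rule inj_onI)
      fix c d assume c: "c \<in> ?E" and d: "d \<in> ?E" and eq: "ev c = ev d"
      have "c *\<^sub>R ev c = ?M *v ev c" using ev[OF c] by simp
      also have "\<dots> = ?M *v ev d" using eq by simp
      also have "\<dots> = d *\<^sub>R ev d" using ev[OF d] by simp
      also have "\<dots> = d *\<^sub>R ev c" using eq by simp
      finally have "(c - d) *\<^sub>R ev c = 0" by (simp add: algebra_simps)
      then show "c = d" using ev[OF c] by simp
    qed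
    have orth: "pairwise orthogonal (ev ` ?E)"
    proof (rule pairwiseI)
      fix u w assume "u \<in> ev ` ?E" "w \<in> ev ` ?E" "u \<noteq> w"
      then obtain c d where c: "c \<in> ?E" "u = ev c" and d: "d \<in> ?E" "w = ev d" by auto
      with \<open>u \<noteq> w\<close> have cd: "c \<noteq> d" by auto
      have "c * (u \<bullet> w) = (?M *v u) \<bullet> w" using ev[OF c(1)] c(2) by simp
      also have "\<dots> = (A *v u) \<bullet> (A *v w)" by (rule AtA_inner)
      also have "\<dots> = (A *v w) \<bullet> (A *v u)" by (rule inner_commute)
      also have "\<dots> = (?M *v w) \<bullet> u" by (rule AtA_inner[symmetric])
      also have "\<dots> = d * (u \<bullet> w)" using ev[OF d(1)] d(2) by (simp add: inner_commute)
      finally have "(c - d) * (u \<bullet> w) = 0" by (simp add: algebra_simps)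
      then show "orthogonal u w" using cd by (simp add: orthogonal_def)
    qed
    have "0 \<notin> ev ` ?E"
    proof
      assume "0 \<in> ev ` ?E"
      then show False
      proof (rule imageE)
        fix c assume c0: "0 = ev c" and c: "c \<in> ?E"
        from ev[OF c] c0 show False by simp
      qed
    qed
    then have "independent (ev ` ?E)" using pairwise_orthogonal_independent[OF orth] by simp
    then have "finite (ev ` ?E)" by (rule independent_bound_general[THEN conjunct1])
    then show ?thesis using inj by (rule finite_imageD)
  qed
  have lmax: "lambda_max ?M \<ge> l0"
    unfolding lambda_max_def using finE l0E by (rule Max_ge)
  obtain i0 :: 'm where True by blast
  have "1 \<le> (norm (A *v (A $ i0)))\<^sup>2"
  proof -
    have "(A *v (A $ i0)) $ i0 = 1"
      using rows by (simp add: matrix_vector_mul_component power2_norm_eq_inner[symmetric])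
    then have "1 \<le> norm (A *v (A $ i0))" using component_le_norm_cart[of "A *v (A $ i0)" i0] by simp
    then show ?thesis by (simp add: one_le_power)
  qed
  also have "\<dots> \<le> l0 * (norm (A $ i0))\<^sup>2" by (rule bound)
  finally have "1 \<le> l0" using rows by simp
  then have "1 \<le> lambda_max ?M" using lmax by simp
  moreover have "(norm (A *v v))\<^sup>2 \<le> lambda_max ?M * (norm v)\<^sup>2" for v
  proof -
    have "l0 * (norm v)\<^sup>2 \<le> lambda_max ?M * (norm v)\<^sup>2"
      using lmax by (intro mult_right_mono) auto
    then show ?thesis using bound[of v] by linarith
  qed
  ultimately show ?thesis by blast
qed

lemma norm_sq_vec: "(norm (v::real^'k))\<^sup>2 = (\<Sum>i\<in>UNIV. (v $ i)\<^sup>2)"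
  unfolding power2_norm_eq_inner inner_vec_def by (simp add: power2_eq_square)

lemma pmf_set_int_mono:
  fixes f g :: "'a \<Rightarrow> real"
  assumes "finite S" "S \<noteq> {}" "\<And>x. x \<in> S \<Longrightarrow> f x \<le> g x"
  shows "(\<integral>x. f x \<partial>measure_pmf (pmf_of_set S)) \<le> (\<integral>x. g x \<partial>measure_pmf (pmf_of_set S))"
  using assms by (simp add: integral_pmf_of_set divide_right_mono sum_mono)

lemma pmf_set_jensen:
  fixes f :: "'a \<Rightarrow> real"
  assumes "finite S" "S \<noteq> {}"
  shows "(\<integral>x. f x \<partial>measure_pmf (pmf_of_set S)) \<le> sqrt (\<integral>x. (f x)\<^sup>2 \<partial>measure_pmf (pmf_of_set S))"
proof -
  have N: "real (card S) > 0" using assms by (simp add: card_gt_0_iff)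
  have cs: "(\<Sum>x\<in>S. f x * 1)\<^sup>2 \<le> (\<Sum>x\<in>S. (f x)\<^sup>2) * (\<Sum>x\<in>S. 1\<^sup>2)"
    by (rule Cauchy_Schwarz_ineq_sum)
  then have "(\<Sum>x\<in>S. f x)\<^sup>2 \<le> (\<Sum>x\<in>S. (f x)\<^sup>2) * real (card S)" by simp
  then have "((\<Sum>x\<in>S. f x) / real (card S))\<^sup>2 \<le> (\<Sum>x\<in>S. (f x)\<^sup>2) / real (card S)"
    using N by (simp add: power_divide field_simps power2_eq_square)
  then show ?thesis using assms by (simp add: integral_pmf_of_set real_le_rsqrt)
qed

locale gsetting =
  fixes A :: "real ^ 'n ^ ('m::finite)" and b :: "real ^ 'm" and \<delta> L :: real and \<beta> :: nat
    and sel :: "real ^ 'n \<Rightarrow> 'm set \<Rightarrow> 'm" and P :: "(real ^ 'n) set"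
  assumes defP: "P = {x. \<forall>i. (A *v x) $ i \<le> b $ i}"
    and rows: "\<forall>i. norm (A $ i) = 1"
    and consistent: "P \<noteq> {}"
    and beta: "1 \<le> \<beta>" "\<beta> \<le> CARD('m)"
    and L: "L > 0"
    and hoffman: "\<forall>y. (infdist y P)\<^sup>2 \<le> L\<^sup>2 * (norm (pos_part_vec (A *v y - b)))\<^sup>2"
    and sel: "\<forall>y S. card S = \<beta> \<longrightarrow> sel y S \<in> S \<and>
               (\<forall>i\<in>S. max ((A $ i) \<bullet> y - b $ i) 0 \<le> max ((A $ sel y S) \<bullet> y - b $ sel y S) 0)"
    and delta: "0 < \<delta>" "\<delta> < 2"
begin

definition res where "res y i = max ((A $ i) \<bullet> y - b $ i) 0"

abbreviation "Sb \<equiv> subsets_of_size \<beta> :: 'm set set"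
abbreviation "mu \<equiv> measure_pmf (pmf_of_set Sb)"
abbreviation "step \<equiv> gskm_step A b \<delta> sel"

lemma Sb_ne: "Sb \<noteq> {}" using subsets_of_size_nonempty[OF beta(2)] .
lemma Sb_fin: "finite Sb" by simp

lemma closedP: "closed P"
proof -
  have "P = {x. \<forall>i. (A $ i) \<bullet> x \<le> b $ i}" unfolding defP by (simp add: matrix_vector_mul_component)
  also have "closed \<dots>"
    by (intro closed_Collect_all closed_Collect_le continuous_intros)
  finally show ?thesis .
qed

lemma proj:
  obtains p where "p \<in> P" "infdist y P = norm (y - p)"
  using infdist_attains_inf[OF closedP consistent, of y] by (metis dist_norm)

lemma res_nonneg: "res y i \<ge> 0" unfolding res_def by simp

lemma res_le_inner:
  assumes "p \<in> P"
  shows "res y i \<le> max ((A $ i) \<bullet> (y - p)) 0"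
proof -
  have "(A $ i) \<bullet> p \<le> b $ i" using assms unfolding defP by (simp add: matrix_vector_mul_component)
  then show ?thesis unfolding res_def by (simp add: inner_diff_right)
qed

lemma res_le_norm:
  assumes "p \<in> P"
  shows "res y i \<le> norm (y - p)"
proof -
  have "(A $ i) \<bullet> (y - p) \<le> norm (A $ i) * norm (y - p)" by (rule norm_cauchy_schwarz)
  then have "(A $ i) \<bullet> (y - p) \<le> norm (y - p)" using rows by simp
  then show ?thesis by (intro order.trans[OF res_le_inner[OF assms]] max.boundedI) auto
qed

lemma res_le_d: "res y i \<le> infdist y P"
proof -
  obtain p where "p \<in> P" "infdist y P = norm (y - p)" by (rule proj)
  then show ?thesis using res_le_norm by simp
qed

lemma step_eq: "step y \<tau> = y - (\<delta> * res y (sel y \<tau>)) *\<^sub>R A $ (sel y \<tau>)"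
  unfolding gskm_step_def res_def Let_def ..

lemma step_norm: "norm (step y \<tau> - y) = \<delta> * res y (sel y \<tau>)"
  using rows delta res_nonneg[of y "sel y \<tau>"] by (simp add: step_eq)

lemma step_dist2:
  "(infdist (step y \<tau>) P)\<^sup>2 \<le> (infdist y P)\<^sup>2 - (2 * \<delta> - \<delta>\<^sup>2) * (res y (sel y \<tau>))\<^sup>2"
proof -
  obtain p where p: "p \<in> P" "infdist y P = norm (y - p)" by (rule proj)
  define i where "i = sel y \<tau>"
  define r where "r = res y i"
  define a where "a = A $ i"
  have na: "norm a = 1" using rows a_def by simp
  have r0: "r \<ge> 0" unfolding r_def by (rule res_nonneg)
  have rr: "r * r \<le> r * ((y - p) \<bullet> a)"
  proof (cases "r > 0")
    case True
    then have "r \<le> a \<bullet> (y - p)" using res_le_inner[OF p(1), of y i] unfolding r_def a_def by simp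
    then show ?thesis using True by (simp add: inner_commute)
  next
    case False then show ?thesis using r0 by simp
  qed
  have eq: "step y \<tau> - p = (y - p) + (- (\<delta> * r)) *\<^sub>R a"
    unfolding step_eq r_def a_def i_def by simp
  have "(norm (step y \<tau> - p))\<^sup>2 = (norm (y - p))\<^sup>2 + 2 * (- (\<delta> * r)) * ((y - p) \<bullet> a) + (- (\<delta> * r))\<^sup>2 * (norm a)\<^sup>2"
    by (simp only: eq norm_sq_add_scale)
  also have "\<dots> \<le> (norm (y - p))\<^sup>2 - (2 * \<delta> - \<delta>\<^sup>2) * r\<^sup>2"
  proof -
    have m: "2 * \<delta> * (r * r) \<le> 2 * \<delta> * (r * ((y - p) \<bullet> a))" using rr by (rule mult_left_mono) (use delta in simp)
    have e1: "2 * (- (\<delta> * r)) * ((y - p) \<bullet> a) + (- (\<delta> * r))\<^sup>2 * (norm a)\<^sup>2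
        = - (2 * \<delta> * (r * ((y - p) \<bullet> a))) + \<delta>\<^sup>2 * r\<^sup>2" using na by (simp add: power2_eq_square algebra_simps)
    have e2: "(2 * \<delta> - \<delta>\<^sup>2) * r\<^sup>2 = 2 * \<delta> * (r * r) - \<delta>\<^sup>2 * r\<^sup>2" by (simp add: power2_eq_square algebra_simps)
    show ?thesis using m e1 e2 by linarith
  qed
  finally have *: "(norm (step y \<tau> - p))\<^sup>2 \<le> (infdist y P)\<^sup>2 - (2 * \<delta> - \<delta>\<^sup>2) * r\<^sup>2" using p by simp
  have "infdist (step y \<tau>) P \<le> norm (step y \<tau> - p)" using infdist_le[OF p(1)] by (simp add: dist_norm)
  then have "(infdist (step y \<tau>) P)\<^sup>2 \<le> (norm (step y \<tau> - p))\<^sup>2"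
    by (intro power_mono) (auto simp: infdist_nonneg)
  then show ?thesis using * unfolding r_def i_def by linarith
qed

lemma posnorm: "(norm (pos_part_vec (A *v y - b)))\<^sup>2 = (\<Sum>i\<in>UNIV. (res y i)\<^sup>2)"
  unfolding norm_sq_vec pos_part_vec_def res_def by (simp add: matrix_vector_mul_component)

lemma sel_Sb: "\<tau> \<in> Sb \<Longrightarrow> sel y \<tau> \<in> \<tau> \<and> (\<forall>i\<in>\<tau>. res y i \<le> res y (sel y \<tau>))"
  using sel unfolding subsets_of_size_def res_def by auto

lemma Esq_lower:
  "(\<integral>\<tau>. (res y (sel y \<tau>))\<^sup>2 \<partial>mu) \<ge> (\<Sum>i\<in>UNIV. (res y i)\<^sup>2) / real CARD('m)"
proof -
  have "(\<integral>\<tau>. (1 / real \<beta>) * (\<Sum>i\<in>\<tau>. (res y i)\<^sup>2) \<partial>mu) \<le> (\<integral>\<tau>. (res y (sel y \<tau>))\<^sup>2 \<partial>mu)"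
  proof (rule pmf_set_int_mono[OF Sb_fin Sb_ne])
    fix \<tau> assume t: "\<tau> \<in> Sb"
    then have c: "card \<tau> = \<beta>" unfolding subsets_of_size_def by simp
    have "(\<Sum>i\<in>\<tau>. (res y i)\<^sup>2) \<le> of_nat (card \<tau>) * (res y (sel y \<tau>))\<^sup>2"
      using sel_Sb[OF t] by (intro sum_bounded_above power_mono) (auto simp: res_nonneg)
    then show "(1 / real \<beta>) * (\<Sum>i\<in>\<tau>. (res y i)\<^sup>2) \<le> (res y (sel y \<tau>))\<^sup>2"
      using c beta by (simp add: field_simps)
  qed
  also have "(\<integral>\<tau>. (1 / real \<beta>) * (\<Sum>i\<in>\<tau>. (res y i)\<^sup>2) \<partial>mu) = (1 / real \<beta>) * (real \<beta> / real CARD('m) * (\<Sum>i\<in>UNIV. (res y i)\<^sup>2))"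
    using avg_sum[OF beta, of "\<lambda>i. (res y i)\<^sup>2"] by simp
  also have "\<dots> = (\<Sum>i\<in>UNIV. (res y i)\<^sup>2) / real CARD('m)" using beta by simp
  finally show ?thesis .
qed

lemma E_dist_sq:
  "(\<integral>\<tau>. (infdist (step y \<tau>) P)\<^sup>2 \<partial>mu)
     \<le> (1 - (2 * \<delta> - \<delta>\<^sup>2) * (1 / (real CARD('m) * L\<^sup>2))) * (infdist y P)\<^sup>2"
proof -
  define \<eta> where "\<eta> = 2 * \<delta> - \<delta>\<^sup>2"
  define d where "d = infdist y P"
  define S where "S = (\<Sum>i\<in>UNIV. (res y i)\<^sup>2)"
  have eta: "\<eta> \<ge> 0" unfolding \<eta>_def using delta by (simp add: power2_eq_square mult_nonneg_nonneg)
  have "(\<integral>\<tau>. (infdist (step y \<tau>) P)\<^sup>2 \<partial>mu) \<le> (\<integral>\<tau>. d\<^sup>2 - \<eta> * (res y (sel y \<tau>))\<^sup>2 \<partial>mu)"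
    using step_dist2 unfolding \<eta>_def d_def by (intro pmf_set_int_mono[OF Sb_fin Sb_ne])
  also have "\<dots> = d\<^sup>2 - \<eta> * (\<integral>\<tau>. (res y (sel y \<tau>))\<^sup>2 \<partial>mu)"
    by (simp add: integrable_measure_pmf_finite Sb_fin)
  also have "\<dots> \<le> d\<^sup>2 - \<eta> * (S / real CARD('m))"
    using Esq_lower[of y] eta unfolding S_def by (intro diff_left_mono mult_left_mono) auto
  also have "\<dots> \<le> d\<^sup>2 - \<eta> * (1 / (real CARD('m) * L\<^sup>2)) * d\<^sup>2"
  proof -
    have "d\<^sup>2 \<le> L\<^sup>2 * S" using hoffman posnorm unfolding d_def S_def by metis
    then have "d\<^sup>2 / L\<^sup>2 \<le> S" using L by (simp add: divide_le_eq mult.commute)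
    then have "(1 / (real CARD('m) * L\<^sup>2)) * d\<^sup>2 \<le> S / real CARD('m)"
      by (simp add: divide_right_mono field_simps)
    then have X: "\<eta> * ((1 / (real CARD('m) * L\<^sup>2)) * d\<^sup>2) \<le> \<eta> * (S / real CARD('m))"
      using eta by (rule mult_left_mono)
    have "\<eta> * (1 / (real CARD('m) * L\<^sup>2)) * d\<^sup>2 = \<eta> * ((1 / (real CARD('m) * L\<^sup>2)) * d\<^sup>2)"
      by (rule mult.assoc)
    then show ?thesis using X by linarith
  qed
  finally show ?thesis unfolding \<eta>_def d_def by (simp add: algebra_simps)
qed

lemma E_dist:
  "(\<integral>\<tau>. infdist (step y \<tau>) P \<partial>mu)
     \<le> sqrt (1 - (2 * \<delta> - \<delta>\<^sup>2) * (1 / (real CARD('m) * L\<^sup>2))) * infdist y P"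
proof -
  have "(\<integral>\<tau>. infdist (step y \<tau>) P \<partial>mu) \<le> sqrt (\<integral>\<tau>. (infdist (step y \<tau>) P)\<^sup>2 \<partial>mu)"
    by (rule pmf_set_jensen[OF Sb_fin Sb_ne])
  also have "\<dots> \<le> sqrt ((1 - (2 * \<delta> - \<delta>\<^sup>2) * (1 / (real CARD('m) * L\<^sup>2))) * (infdist y P)\<^sup>2)"
    using E_dist_sq by simp
  also have "\<dots> = sqrt (1 - (2 * \<delta> - \<delta>\<^sup>2) * (1 / (real CARD('m) * L\<^sup>2))) * infdist y P"
    by (simp add: real_sqrt_mult infdist_nonneg)
  finally show ?thesis .
qed

lemma E_res:
  "(\<integral>\<tau>. res y (sel y \<tau>) \<partial>mu)
     \<le> sqrt (min 1 (real \<beta> / real CARD('m) * lambda_max (transpose A ** A))) * infdist y P"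
proof -
  define d where "d = infdist y P"
  define lm where "lm = lambda_max (transpose A ** A)"
  obtain p where p: "p \<in> P" "d = norm (y - p)" using proj unfolding d_def by metis
  have d0: "d \<ge> 0" unfolding d_def by (simp add: infdist_nonneg)
  have lmb: "\<forall>v. (norm (A *v v))\<^sup>2 \<le> lm * (norm v)\<^sup>2" using lambda_max_bound[OF rows] unfolding lm_def by blast
  have "(\<Sum>i\<in>UNIV. (res y i)\<^sup>2) \<le> (\<Sum>i\<in>UNIV. ((A *v (y - p)) $ i)\<^sup>2)"
  proof (rule sum_mono)
    fix i
    have "res y i \<le> \<bar>(A *v (y - p)) $ i\<bar>"
      using res_le_inner[OF p(1), of y i] by (simp add: matrix_vector_mul_component)
    then show "(res y i)\<^sup>2 \<le> ((A *v (y - p)) $ i)\<^sup>2"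
      using res_nonneg[of y i] by (metis abs_le_square_iff abs_of_nonneg)
  qed
  also have "\<dots> = (norm (A *v (y - p)))\<^sup>2" by (simp add: norm_sq_vec)
  also have "\<dots> \<le> lm * d\<^sup>2" using lmb p by simp
  finally have S: "(\<Sum>i\<in>UNIV. (res y i)\<^sup>2) \<le> lm * d\<^sup>2" .
  have e1: "(\<integral>\<tau>. (res y (sel y \<tau>))\<^sup>2 \<partial>mu) \<le> (\<integral>\<tau>. (\<Sum>i\<in>\<tau>. (res y i)\<^sup>2) \<partial>mu)"
  proof (rule pmf_set_int_mono[OF Sb_fin Sb_ne])
    fix \<tau> assume t: "\<tau> \<in> Sb"
    then have "finite \<tau>" by simp
    then show "(res y (sel y \<tau>))\<^sup>2 \<le> (\<Sum>i\<in>\<tau>. (res y i)\<^sup>2)"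
      using sel_Sb[OF t] by (intro member_le_sum) auto
  qed
  also have "\<dots> = real \<beta> / real CARD('m) * (\<Sum>i\<in>UNIV. (res y i)\<^sup>2)" by (rule avg_sum[OF beta])
  also have "\<dots> \<le> real \<beta> / real CARD('m) * (lm * d\<^sup>2)" using S by (intro mult_left_mono) auto
  finally have E1: "(\<integral>\<tau>. (res y (sel y \<tau>))\<^sup>2 \<partial>mu) \<le> (real \<beta> / real CARD('m) * lm) * d\<^sup>2" by simp
  have "(\<integral>\<tau>. (res y (sel y \<tau>))\<^sup>2 \<partial>mu) \<le> (\<integral>\<tau>. d\<^sup>2 \<partial>mu)"
  proof (rule pmf_set_int_mono[OF Sb_fin Sb_ne])
    fix \<tau>
    show "(res y (sel y \<tau>))\<^sup>2 \<le> d\<^sup>2" using res_le_d[of y "sel y \<tau>"] res_nonneg[of y "sel y \<tau>"] unfolding d_def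
      by (intro power_mono) auto
  qed
  then have E2: "(\<integral>\<tau>. (res y (sel y \<tau>))\<^sup>2 \<partial>mu) \<le> 1 * d\<^sup>2" by simp
  have E: "(\<integral>\<tau>. (res y (sel y \<tau>))\<^sup>2 \<partial>mu) \<le> min 1 (real \<beta> / real CARD('m) * lm) * d\<^sup>2"
    using E1 E2 by (simp add: min_def)
  have "(\<integral>\<tau>. res y (sel y \<tau>) \<partial>mu) \<le> sqrt (\<integral>\<tau>. (res y (sel y \<tau>))\<^sup>2 \<partial>mu)"
    by (rule pmf_set_jensen[OF Sb_fin Sb_ne])
  also have "\<dots> \<le> sqrt (min 1 (real \<beta> / real CARD('m) * lm) * d\<^sup>2)" using E by simp
  also have "\<dots> = sqrt (min 1 (real \<beta> / real CARD('m) * lm)) * d" using d0 by (simp add: real_sqrt_mult)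
  finally show ?thesis unfolding d_def lm_def .
qed

end

context gsetting
begin

abbreviation "MM \<equiv> PiM UNIV (\<lambda>_::nat. mu)"

definition pr where "pr \<xi> x0 k \<omega> = gskm_pair A b \<delta> \<xi> sel x0 k \<omega>"
definition XX where "XX \<xi> x0 k \<omega> = fst (pr \<xi> x0 k \<omega>)"
definition ZZ where "ZZ \<xi> x0 k \<omega> = snd (pr \<xi> x0 k \<omega>)"

lemma XX_0: "XX \<xi> x0 0 \<omega> = x0" unfolding XX_def pr_def by simp
lemma ZZ_0: "ZZ \<xi> x0 0 \<omega> = step x0 (\<omega> 1)" unfolding ZZ_def pr_def by simp
lemma ZZ_Suc: "ZZ \<xi> x0 (Suc k) \<omega> = step (XX \<xi> x0 k \<omega>) (\<omega> (Suc k))"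
  unfolding ZZ_def XX_def pr_def by (simp add: Let_def)
lemma XX_Suc: "XX \<xi> x0 (Suc k) \<omega> = (1 - \<xi>) *\<^sub>R step (XX \<xi> x0 k \<omega>) (\<omega> (Suc k)) + \<xi> *\<^sub>R ZZ \<xi> x0 k \<omega>"
  unfolding ZZ_def XX_def pr_def by (simp add: Let_def)
lemma ZZ_1: "ZZ \<xi> x0 1 \<omega> = ZZ \<xi> x0 0 \<omega>"
  using ZZ_Suc[of \<xi> x0 0 \<omega>] by (simp add: ZZ_0 XX_0)

lemma pr_dep: "(\<forall>i<Suc (Suc k). \<omega> i = \<omega>' i) \<Longrightarrow> pr \<xi> x0 k \<omega> = pr \<xi> x0 k \<omega>'"
proof (induction k)
  case 0 then show ?case unfolding pr_def by simp
next
  case (Suc k)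
  then have "pr \<xi> x0 k \<omega> = pr \<xi> x0 k \<omega>'" by simp
  moreover have "\<omega> (Suc k) = \<omega>' (Suc k)" using Suc.prems by simp
  ultimately show ?case unfolding pr_def by (simp add: Let_def)
qed

lemma fdep_ZZ: "fdep (Suc (Suc k)) (ZZ \<xi> x0 k)"
  unfolding fdep_def ZZ_def using pr_dep by metis

lemma fdep_XX: "fdep (Suc k) (XX \<xi> x0 k)"
proof (cases k)
  case 0 then show ?thesis unfolding fdep_def by (simp add: XX_0)
next
  case (Suc j)
  show ?thesis unfolding fdep_def
  proof (intro allI impI)
    fix \<omega> \<omega>' :: "nat \<Rightarrow> 'm set" assume h: "\<forall>i<Suc k. \<omega> i = \<omega>' i"
    then have "pr \<xi> x0 j \<omega> = pr \<xi> x0 j \<omega>'" using Suc by (intro pr_dep) auto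
    moreover have "\<omega> (Suc j) = \<omega>' (Suc j)" using h Suc by simp
    ultimately show "XX \<xi> x0 k \<omega> = XX \<xi> x0 k \<omega>'"
      using Suc unfolding XX_def by (simp add: pr_def Let_def)
  qed
qed

lemma fdep_comp: "fdep n f \<Longrightarrow> fdep n (\<lambda>\<omega>. g (f \<omega>))"
  unfolding fdep_def by metis

lemma fdep_comp2: "fdep n f \<Longrightarrow> fdep n g \<Longrightarrow> fdep n (\<lambda>\<omega>. h (f \<omega>) (g \<omega>))"
  unfolding fdep_def by metis

lemma MM_prob: "prob_space MM"
  by (rule prob_space_PiM) (rule prob_space_measure_pmf)

lemma int_const_MM: "(\<integral>\<omega>. c \<partial>MM) = (c::real)"
proof -
  interpret prob_space MM by (rule MM_prob)
  show ?thesis by (simp add: prob_space)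
qed


lemma intg: "fdep n f \<Longrightarrow> integrable MM (f :: (nat \<Rightarrow> 'm set) \<Rightarrow> real)"
  by (rule fdep_integrable_UNIV)

definition uu where "uu \<xi> x0 k = (\<integral>\<omega>. infdist (XX \<xi> x0 k \<omega>) P \<partial>MM)"
definition ee where "ee \<xi> x0 k = (\<integral>\<omega>. norm (ZZ \<xi> x0 (Suc k) \<omega> - ZZ \<xi> x0 k \<omega>) \<partial>MM)"

lemma E_step_dist:
  "(\<integral>\<omega>. infdist (ZZ \<xi> x0 (Suc k) \<omega>) P \<partial>MM)
     \<le> sqrt (1 - (2 * \<delta> - \<delta>\<^sup>2) * (1 / (real CARD('m) * L\<^sup>2))) * uu \<xi> x0 k"
proof -
  let ?c = "sqrt (1 - (2 * \<delta> - \<delta>\<^sup>2) * (1 / (real CARD('m) * L\<^sup>2)))"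
  have "(\<integral>\<omega>. infdist (ZZ \<xi> x0 (Suc k) \<omega>) P \<partial>MM) = (\<integral>\<omega>. infdist (step (XX \<xi> x0 k \<omega>) (\<omega> (Suc k))) P \<partial>MM)"
    by (simp add: ZZ_Suc)
  also have "\<dots> = (\<integral>\<omega>. (\<integral>\<tau>. infdist (step (XX \<xi> x0 k \<omega>) \<tau>) P \<partial>mu) \<partial>MM)"
    by (rule indep_step[OF fdep_XX])
  also have "\<dots> \<le> (\<integral>\<omega>. ?c * infdist (XX \<xi> x0 k \<omega>) P \<partial>MM)"
  proof (rule integral_mono)
    show "integrable MM (\<lambda>\<omega>. \<integral>\<tau>. infdist (step (XX \<xi> x0 k \<omega>) \<tau>) P \<partial>mu)"
      by (rule intg, rule fdep_comp[OF fdep_XX])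
    show "integrable MM (\<lambda>\<omega>. ?c * infdist (XX \<xi> x0 k \<omega>) P)"
      by (rule intg, rule fdep_comp[OF fdep_XX])
    show "\<And>\<omega>. (\<integral>\<tau>. infdist (step (XX \<xi> x0 k \<omega>) \<tau>) P \<partial>mu) \<le> ?c * infdist (XX \<xi> x0 k \<omega>) P"
      by (rule E_dist)
  qed
  also have "\<dots> = ?c * uu \<xi> x0 k" unfolding uu_def by simp
  finally show ?thesis .
qed

lemma E_step_res:
  "(\<integral>\<omega>. res (XX \<xi> x0 k \<omega>) (sel (XX \<xi> x0 k \<omega>) (\<omega> (Suc k))) \<partial>MM)
     \<le> sqrt (min 1 (real \<beta> / real CARD('m) * lambda_max (transpose A ** A))) * uu \<xi> x0 k"
proof -
  let ?c = "sqrt (min 1 (real \<beta> / real CARD('m) * lambda_max (transpose A ** A)))"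
  have "(\<integral>\<omega>. res (XX \<xi> x0 k \<omega>) (sel (XX \<xi> x0 k \<omega>) (\<omega> (Suc k))) \<partial>MM)
      = (\<integral>\<omega>. (\<integral>\<tau>. res (XX \<xi> x0 k \<omega>) (sel (XX \<xi> x0 k \<omega>) \<tau>) \<partial>mu) \<partial>MM)"
    by (rule indep_step[OF fdep_XX])
  also have "\<dots> \<le> (\<integral>\<omega>. ?c * infdist (XX \<xi> x0 k \<omega>) P \<partial>MM)"
  proof (rule integral_mono)
    show "integrable MM (\<lambda>\<omega>. \<integral>\<tau>. res (XX \<xi> x0 k \<omega>) (sel (XX \<xi> x0 k \<omega>) \<tau>) \<partial>mu)"
      by (rule intg, rule fdep_comp[OF fdep_XX])
    show "integrable MM (\<lambda>\<omega>. ?c * infdist (XX \<xi> x0 k \<omega>) P)"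
      by (rule intg, rule fdep_comp[OF fdep_XX])
    show "\<And>\<omega>. (\<integral>\<tau>. res (XX \<xi> x0 k \<omega>) (sel (XX \<xi> x0 k \<omega>) \<tau>) \<partial>mu) \<le> ?c * infdist (XX \<xi> x0 k \<omega>) P"
      by (rule E_res)
  qed
  also have "\<dots> = ?c * uu \<xi> x0 k" unfolding uu_def by simp
  finally show ?thesis .
qed

lemma R1: "uu \<xi> x0 (Suc k)
   \<le> sqrt (1 - (2 * \<delta> - \<delta>\<^sup>2) * (1 / (real CARD('m) * L\<^sup>2))) * uu \<xi> x0 k + \<bar>\<xi>\<bar> * ee \<xi> x0 k"
proof -
  have fZs: "fdep (Suc (Suc (Suc k))) (ZZ \<xi> x0 (Suc k))" by (rule fdep_ZZ)
  have fZ: "fdep (Suc (Suc (Suc k))) (ZZ \<xi> x0 k)" by (rule fdep_mono[OF fdep_ZZ]) simp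
  have pw: "infdist (XX \<xi> x0 (Suc k) \<omega>) P
      \<le> infdist (ZZ \<xi> x0 (Suc k) \<omega>) P + \<bar>\<xi>\<bar> * norm (ZZ \<xi> x0 (Suc k) \<omega> - ZZ \<xi> x0 k \<omega>)" for \<omega>
  proof -
    let ?Zs = "ZZ \<xi> x0 (Suc k) \<omega>" and ?Z = "ZZ \<xi> x0 k \<omega>"
    have "XX \<xi> x0 (Suc k) \<omega> = (1 - \<xi>) *\<^sub>R ?Zs + \<xi> *\<^sub>R ?Z" by (simp add: XX_Suc ZZ_Suc)
    then have "XX \<xi> x0 (Suc k) \<omega> - ?Zs = \<xi> *\<^sub>R (?Z - ?Zs)" by (simp add: algebra_simps)
    then have "dist (XX \<xi> x0 (Suc k) \<omega>) ?Zs = \<bar>\<xi>\<bar> * norm (?Zs - ?Z)"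
      by (simp add: dist_norm norm_minus_commute)
    then show ?thesis using infdist_triangle[of "XX \<xi> x0 (Suc k) \<omega>" P ?Zs] by simp
  qed
  have "uu \<xi> x0 (Suc k) \<le> (\<integral>\<omega>. infdist (ZZ \<xi> x0 (Suc k) \<omega>) P + \<bar>\<xi>\<bar> * norm (ZZ \<xi> x0 (Suc k) \<omega> - ZZ \<xi> x0 k \<omega>) \<partial>MM)"
    unfolding uu_def
  proof (rule integral_mono[OF _ _ pw])
    show "integrable MM (\<lambda>\<omega>. infdist (XX \<xi> x0 (Suc k) \<omega>) P)"
      by (rule intg, rule fdep_comp[OF fdep_XX])
    show "integrable MM (\<lambda>\<omega>. infdist (ZZ \<xi> x0 (Suc k) \<omega>) P + \<bar>\<xi>\<bar> * norm (ZZ \<xi> x0 (Suc k) \<omega> - ZZ \<xi> x0 k \<omega>))"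
      by (rule intg, rule fdep_comp2[OF fZs fZ])
  qed
  also have "\<dots> = (\<integral>\<omega>. infdist (ZZ \<xi> x0 (Suc k) \<omega>) P \<partial>MM) + \<bar>\<xi>\<bar> * ee \<xi> x0 k"
  proof -
    have i1: "integrable MM (\<lambda>\<omega>. infdist (ZZ \<xi> x0 (Suc k) \<omega>) P)" by (rule intg, rule fdep_comp[OF fZs])
    have i2: "integrable MM (\<lambda>\<omega>. \<bar>\<xi>\<bar> * norm (ZZ \<xi> x0 (Suc k) \<omega> - ZZ \<xi> x0 k \<omega>))"
      by (rule intg, rule fdep_comp2[OF fZs fZ])
    show ?thesis unfolding ee_def by (simp add: Bochner_Integration.integral_add[OF i1 i2])
  qed
  also have "\<dots> \<le> sqrt (1 - (2 * \<delta> - \<delta>\<^sup>2) * (1 / (real CARD('m) * L\<^sup>2))) * uu \<xi> x0 k + \<bar>\<xi>\<bar> * ee \<xi> x0 k"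
    using E_step_dist[of \<xi> x0 k] by simp
  finally show ?thesis .
qed

lemma R2: "ee \<xi> x0 (Suc k)
   \<le> \<bar>\<xi>\<bar> * ee \<xi> x0 k + \<delta> * sqrt (min 1 (real \<beta> / real CARD('m) * lambda_max (transpose A ** A))) * uu \<xi> x0 (Suc k)"
proof -
  have fZss: "fdep (Suc (Suc (Suc (Suc k)))) (ZZ \<xi> x0 (Suc (Suc k)))" by (rule fdep_mono[OF fdep_ZZ]) simp
  have fZs: "fdep (Suc (Suc (Suc (Suc k)))) (ZZ \<xi> x0 (Suc k))" by (rule fdep_mono[OF fdep_ZZ]) simp
  have fZ: "fdep (Suc (Suc (Suc (Suc k)))) (ZZ \<xi> x0 k)" by (rule fdep_mono[OF fdep_ZZ]) simp
  have fX: "fdep (Suc (Suc (Suc (Suc k)))) (XX \<xi> x0 (Suc k))" by (rule fdep_mono[OF fdep_XX]) simp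
  have fR: "fdep (Suc (Suc (Suc (Suc k)))) (\<lambda>\<omega>. res (XX \<xi> x0 (Suc k) \<omega>) (sel (XX \<xi> x0 (Suc k) \<omega>) (\<omega> (Suc (Suc k)))))"
    unfolding fdep_def
  proof (intro allI impI)
    fix \<omega> \<omega>' :: "nat \<Rightarrow> 'm set" assume h: "\<forall>i<Suc (Suc (Suc (Suc k))). \<omega> i = \<omega>' i"
    then have "XX \<xi> x0 (Suc k) \<omega> = XX \<xi> x0 (Suc k) \<omega>'"
      using fdep_XX[where k="Suc k"] unfolding fdep_def by simp
    moreover have "\<omega> (Suc (Suc k)) = \<omega>' (Suc (Suc k))" using h by simp
    ultimately show "res (XX \<xi> x0 (Suc k) \<omega>) (sel (XX \<xi> x0 (Suc k) \<omega>) (\<omega> (Suc (Suc k))))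
      = res (XX \<xi> x0 (Suc k) \<omega>') (sel (XX \<xi> x0 (Suc k) \<omega>') (\<omega>' (Suc (Suc k))))" by simp
  qed
  have pw: "norm (ZZ \<xi> x0 (Suc (Suc k)) \<omega> - ZZ \<xi> x0 (Suc k) \<omega>)
      \<le> \<delta> * res (XX \<xi> x0 (Suc k) \<omega>) (sel (XX \<xi> x0 (Suc k) \<omega>) (\<omega> (Suc (Suc k))))
        + \<bar>\<xi>\<bar> * norm (ZZ \<xi> x0 (Suc k) \<omega> - ZZ \<xi> x0 k \<omega>)" for \<omega>
  proof -
    let ?X = "XX \<xi> x0 (Suc k) \<omega>" and ?Zs = "ZZ \<xi> x0 (Suc k) \<omega>" and ?Z = "ZZ \<xi> x0 k \<omega>"
    let ?S = "step ?X (\<omega> (Suc (Suc k)))"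
    have zss: "ZZ \<xi> x0 (Suc (Suc k)) \<omega> = ?S" by (rule ZZ_Suc)
    have "?X = (1 - \<xi>) *\<^sub>R ?Zs + \<xi> *\<^sub>R ?Z" by (simp add: XX_Suc ZZ_Suc)
    then have xz: "?X - ?Zs = \<xi> *\<^sub>R (?Z - ?Zs)" by (simp add: algebra_simps)
    have "ZZ \<xi> x0 (Suc (Suc k)) \<omega> - ?Zs = (?S - ?X) + (?X - ?Zs)" by (simp add: zss)
    then have "norm (ZZ \<xi> x0 (Suc (Suc k)) \<omega> - ?Zs) \<le> norm (?S - ?X) + norm (?X - ?Zs)"
      by (metis norm_triangle_ineq)
    also have "norm (?X - ?Zs) = \<bar>\<xi>\<bar> * norm (?Zs - ?Z)" by (simp add: xz norm_minus_commute)
    also have "norm (?S - ?X) = \<delta> * res ?X (sel ?X (\<omega> (Suc (Suc k))))" by (rule step_norm)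
    finally show ?thesis .
  qed
  have "ee \<xi> x0 (Suc k) \<le> (\<integral>\<omega>. \<delta> * res (XX \<xi> x0 (Suc k) \<omega>) (sel (XX \<xi> x0 (Suc k) \<omega>) (\<omega> (Suc (Suc k))))
        + \<bar>\<xi>\<bar> * norm (ZZ \<xi> x0 (Suc k) \<omega> - ZZ \<xi> x0 k \<omega>) \<partial>MM)"
    unfolding ee_def
  proof (rule integral_mono[OF _ _ pw])
    show "integrable MM (\<lambda>\<omega>. norm (ZZ \<xi> x0 (Suc (Suc k)) \<omega> - ZZ \<xi> x0 (Suc k) \<omega>))"
      by (rule intg, rule fdep_comp2[OF fZss fZs])
    show "integrable MM (\<lambda>\<omega>. \<delta> * res (XX \<xi> x0 (Suc k) \<omega>) (sel (XX \<xi> x0 (Suc k) \<omega>) (\<omega> (Suc (Suc k))))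
        + \<bar>\<xi>\<bar> * norm (ZZ \<xi> x0 (Suc k) \<omega> - ZZ \<xi> x0 k \<omega>))"
      by (rule intg, rule fdep_comp2[OF fR fdep_comp2[OF fZs fZ]])
  qed
  also have "\<dots> = \<delta> * (\<integral>\<omega>. res (XX \<xi> x0 (Suc k) \<omega>) (sel (XX \<xi> x0 (Suc k) \<omega>) (\<omega> (Suc (Suc k)))) \<partial>MM) + \<bar>\<xi>\<bar> * ee \<xi> x0 k"
  proof -
    have i1: "integrable MM (\<lambda>\<omega>. \<delta> * res (XX \<xi> x0 (Suc k) \<omega>) (sel (XX \<xi> x0 (Suc k) \<omega>) (\<omega> (Suc (Suc k)))))"
      by (rule intg, rule fdep_comp[OF fR])
    have i2: "integrable MM (\<lambda>\<omega>. \<bar>\<xi>\<bar> * norm (ZZ \<xi> x0 (Suc k) \<omega> - ZZ \<xi> x0 k \<omega>))"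
      by (rule intg, rule fdep_comp2[OF fZs fZ])
    show ?thesis unfolding ee_def by (simp add: Bochner_Integration.integral_add[OF i1 i2])
  qed
  also have "\<dots> \<le> \<delta> * (sqrt (min 1 (real \<beta> / real CARD('m) * lambda_max (transpose A ** A))) * uu \<xi> x0 (Suc k)) + \<bar>\<xi>\<bar> * ee \<xi> x0 k"
    using E_step_res[of \<xi> x0 "Suc k"] delta by simp
  finally show ?thesis by (simp add: algebra_simps)
qed

lemma uu_0: "uu \<xi> x0 0 = infdist x0 P"
  unfolding uu_def XX_0 by (rule int_const_MM)

lemma ee_0: "ee \<xi> x0 0 = 0"
  unfolding ee_def by (simp add: ZZ_1[simplified])

lemma ee_nonneg: "ee \<xi> x0 k \<ge> 0"
  unfolding ee_def by simp

lemma uu_nonneg: "uu \<xi> x0 k \<ge> 0"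
  unfolding uu_def by (simp add: infdist_nonneg)

end

fun seqAE :: "real \<Rightarrow> real \<Rightarrow> real \<Rightarrow> real \<Rightarrow> nat \<Rightarrow> real \<times> real" where
  "seqAE p1 p2 p3 p4 0 = (1, 0)"
| "seqAE p1 p2 p3 p4 (Suc k) =
     (p1 * fst (seqAE p1 p2 p3 p4 k) + p2 * snd (seqAE p1 p2 p3 p4 k),
      p3 * fst (seqAE p1 p2 p3 p4 k) + p4 * snd (seqAE p1 p2 p3 p4 k))"

lemma rec_bound:
  fixes u e :: "nat \<Rightarrow> real"
  assumes p: "p1 \<ge> 0" "p2 \<ge> 0" "p3 \<ge> 0" "p4 \<ge> 0"
    and d: "d \<ge> 0" and u0: "u 0 \<le> d" and e0: "e 0 \<le> 0"
    and ru: "\<And>k. u (Suc k) \<le> p1 * u k + p2 * e k"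
    and re: "\<And>k. e (Suc k) \<le> p3 * u k + p4 * e k"
  shows "u k \<le> fst (seqAE p1 p2 p3 p4 k) * d \<and> e k \<le> snd (seqAE p1 p2 p3 p4 k) * d"
proof (induction k)
  case 0 then show ?case using u0 e0 by simp
next
  case (Suc k)
  let ?a = "fst (seqAE p1 p2 p3 p4 k)" and ?b = "snd (seqAE p1 p2 p3 p4 k)"
  have h1: "p1 * u k \<le> p1 * (?a * d)" using Suc p by (intro mult_left_mono) auto
  have h2: "p2 * e k \<le> p2 * (?b * d)" using Suc p by (intro mult_left_mono) auto
  have h3: "p3 * u k \<le> p3 * (?a * d)" using Suc p by (intro mult_left_mono) auto
  have h4: "p4 * e k \<le> p4 * (?b * d)" using Suc p by (intro mult_left_mono) auto
  have "u (Suc k) \<le> (p1 * ?a + p2 * ?b) * d" using ru[of k] h1 h2 by (simp add: algebra_simps)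
  moreover have "e (Suc k) \<le> (p3 * ?a + p4 * ?b) * d" using re[of k] h3 h4 by (simp add: algebra_simps)
  ultimately show ?case by simp
qed

lemma seqAE_closed:
  fixes p1 p2 p3 p4 D :: real
  assumes p3: "p3 > 0" and D: "D = (p1 - p4)\<^sup>2 + 4 * p2 * p3" and Dpos: "D > 0"
  defines "G1 \<equiv> (p1 - p4 + sqrt D) / (2 * p3)"
    and "G2 \<equiv> (p1 - p4 - sqrt D) / (2 * p3)"
    and "G3 \<equiv> p3 / sqrt D"
    and "r1 \<equiv> (p1 + p4 - sqrt D) / 2"
    and "r2 \<equiv> (p1 + p4 + sqrt D) / 2"
  shows "seqAE p1 p2 p3 p4 k = (G3 * (G1 * r2 ^ k - G2 * r1 ^ k), G3 * (r2 ^ k - r1 ^ k))"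
proof -
  define s where "s = sqrt D"
  have s2: "s * s = D" unfolding s_def using Dpos by simp
  have spos: "s > 0" unfolding s_def using Dpos by simp
  have i1: "G3 * (G1 - G2) = 1" unfolding G1_def G2_def G3_def s_def[symmetric] using spos p3
    by (simp add: field_simps)
  have i2: "r2 = p3 * G1 + p4" "r1 = p3 * G2 + p4"
    unfolding G1_def G2_def r1_def r2_def using p3 by (simp_all add: field_simps)
  have i3: "G1 * r2 = p1 * G1 + p2" "G2 * r1 = p1 * G2 + p2"
    unfolding G1_def G2_def r1_def r2_def s_def[symmetric] using p3 s2 D
    by (simp_all add: field_simps power2_eq_square, algebra+)
  show ?thesis
  proof (induction k)
    case 0 then show ?case using i1 by (simp add: algebra_simps)
  next
    case (Suc k)
    have a: "p1 * (G3 * (G1 * r2 ^ k - G2 * r1 ^ k)) + p2 * (G3 * (r2 ^ k - r1 ^ k))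
        = G3 * ((p1 * G1 + p2) * r2 ^ k - (p1 * G2 + p2) * r1 ^ k)" by (simp add: algebra_simps)
    have b: "p3 * (G3 * (G1 * r2 ^ k - G2 * r1 ^ k)) + p4 * (G3 * (r2 ^ k - r1 ^ k))
        = G3 * ((p3 * G1 + p4) * r2 ^ k - (p3 * G2 + p4) * r1 ^ k)" by (simp add: algebra_simps)
    have "seqAE p1 p2 p3 p4 (Suc k)
        = (p1 * (G3 * (G1 * r2 ^ k - G2 * r1 ^ k)) + p2 * (G3 * (r2 ^ k - r1 ^ k)),
           p3 * (G3 * (G1 * r2 ^ k - G2 * r1 ^ k)) + p4 * (G3 * (r2 ^ k - r1 ^ k)))"
      using Suc by simp
    also have "\<dots> = (G3 * ((p1 * G1 + p2) * r2 ^ k - (p1 * G2 + p2) * r1 ^ k),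
                       G3 * ((p3 * G1 + p4) * r2 ^ k - (p3 * G2 + p4) * r1 ^ k))"
      by (simp only: a b)
    also have "\<dots> = (G3 * ((G1 * r2) * r2 ^ k - (G2 * r1) * r1 ^ k),
                       G3 * (r2 * r2 ^ k - r1 * r1 ^ k))"
      by (simp only: i3[symmetric] i2[symmetric])
    also have "\<dots> = (G3 * (G1 * r2 ^ Suc k - G2 * r1 ^ Suc k), G3 * (r2 ^ Suc k - r1 ^ Suc k))"
      by (simp add: algebra_simps)
    finally show ?case .
  qed
qed

lemma seqAE_zero:
  assumes "p1 = 0" "p3 = 0" "k \<ge> 1"
  shows "seqAE p1 p2 p3 p4 k = (0, 0)"
  using assms(3)
proof (induction k rule: dec_induct)
  case base then show ?case using assms by simp
next
  case (step k) then show ?case using assms by simp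
qed




theorem theorem4:
  fixes A :: "real ^ 'n ^ ('m::finite)" and b :: "real ^ 'm"
    and L \<delta> \<xi> :: real and \<beta> :: nat and x0 :: "real ^ 'n"
    and sel :: "real ^ 'n \<Rightarrow> 'm set \<Rightarrow> 'm"
    and P :: "(real ^ 'n) set" and m \<mu>1 \<mu>2 \<eta> h \<Pi>1 \<Pi>2 \<Pi>3 \<Pi>4 D \<Gamma>1 \<Gamma>2 \<Gamma>3 \<rho>1 \<rho>2 :: real
    and M :: "(nat \<Rightarrow> 'm set) measure"
    and x z :: "nat \<Rightarrow> (nat \<Rightarrow> 'm set) \<Rightarrow> real ^ 'n"
  assumes defP: "P = {x. \<forall>i. (A *v x) $ i \<le> b $ i}"
    and defm: "m = real CARD('m)"
    and "\<mu>1 = 1 / (m * L\<^sup>2)"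
    and "\<mu>2 = min 1 (real \<beta> / m * lambda_max (transpose A ** A))"
    and "\<eta> = 2 * \<delta> - \<delta>\<^sup>2"
    and "h = 1 - \<eta> * \<mu>1"
    and "\<Pi>1 = sqrt h"
    and "\<Pi>2 = \<bar>\<xi>\<bar>"
    and "\<Pi>3 = \<delta> * sqrt (\<mu>2 * h)"
    and "\<Pi>4 = \<bar>\<xi>\<bar> * (1 + \<delta> * sqrt \<mu>2)"
    and "D = (\<Pi>1 - \<Pi>4)\<^sup>2 + 4 * \<Pi>2 * \<Pi>3"
    and "\<Gamma>1 = (\<Pi>1 - \<Pi>4 + sqrt D) / (2 * \<Pi>3)"
    and "\<Gamma>2 = (\<Pi>1 - \<Pi>4 - sqrt D) / (2 * \<Pi>3)"
    and "\<Gamma>3 = \<Pi>3 / sqrt D"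
    and "\<rho>1 = (\<Pi>1 + \<Pi>4 - sqrt D) / 2"
    and "\<rho>2 = (\<Pi>1 + \<Pi>4 + sqrt D) / 2"
    and "M = gskm_space \<beta>"
    and "x = gskm_x A b \<delta> \<xi> sel x0"
    and "z = gskm_z A b \<delta> \<xi> sel x0"
    and rows: "\<forall>i. norm (A $ i) = 1"
    and consistent: "P \<noteq> {}"
    and beta: "1 \<le> \<beta>" "\<beta> \<le> CARD('m)"
    and L: "L > 0"
    and hoffman: "\<forall>y. (infdist y P)\<^sup>2 \<le> L\<^sup>2 * (norm (pos_part_vec (A *v y - b)))\<^sup>2"
    and sel: "\<forall>y S. card S = \<beta> \<longrightarrow> sel y S \<in> S \<and>
               (\<forall>i\<in>S. max ((A $ i) \<bullet> y - b $ i) 0 \<le> max ((A $ sel y S) \<bullet> y - b $ sel y S) 0)"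
    and delta: "0 < \<delta>" "\<delta> < 2"
    and xi: "-1 < \<xi>" "\<xi> \<le> 0"
    and cond: "(1 + \<xi>) * sqrt h - \<xi> * (1 + \<delta> * sqrt \<mu>2) < 1"
  shows "(AE \<omega> in M. convergent (\<lambda>k. x k \<omega>))
    \<and> (\<forall>k\<ge>1. (\<integral>\<omega>. infdist (x (k + 1) \<omega>) P \<partial>M)
              \<le> (- \<Gamma>2 * \<Gamma>3 * \<rho>1 ^ k + \<Gamma>1 * \<Gamma>3 * \<rho>2 ^ k) * infdist x0 P)
    \<and> (\<forall>k\<ge>1. (\<integral>\<omega>. norm (z (k + 1) \<omega> - z k \<omega>) \<partial>M)
              \<le> (- \<Gamma>3 * \<rho>1 ^ k + \<Gamma>3 * \<rho>2 ^ k) * infdist x0 P)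
    \<and> \<Gamma>1 \<ge> 0 \<and> \<Gamma>3 \<ge> 0 \<and> 0 \<le> \<rho>1 \<and> \<rho>1 \<le> \<rho>2 \<and> \<rho>2 < 1"
proof -
  note asm = assms
  interpret gsetting A b \<delta> L \<beta> sel P
    by unfold_locales (use assms in auto)
  define lm where "lm = lambda_max (transpose A ** A)"
  define c where "c = \<delta> * sqrt \<mu>2"
  define d where "d = infdist x0 P"
  have m_def': "m = real CARD('m)" by fact
  have mpos: "m > 0" using defm by simp
  have lm1: "lm \<ge> 1" using lambda_max_bound[OF rows] unfolding lm_def by blast
  have mu2pos: "\<mu>2 > 0"
  proof -
    have "real \<beta> / m * lm > 0" using beta mpos lm1 by simp
    then show ?thesis using assms(4) lm_def by simp
  qed
  have d0: "d \<ge> 0" unfolding d_def by (simp add: infdist_nonneg)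
  have eta: "\<eta> > 0" using assms(5) delta by (simp add: power2_eq_square)
  have mu1: "\<mu>1 > 0" using assms(3) mpos L by simp
  have h1: "h \<le> 1" using assms(6) eta mu1 by simp
  have hexp: "h = 1 - (2 * \<delta> - \<delta>\<^sup>2) * (1 / (real CARD('m) * L\<^sup>2))"
    using assms(3,5,6) defm by simp
  have h0: "h \<ge> 0"
  proof -
    obtain p where p: "p \<in> P" using consistent by blast
    obtain i0 :: 'm where True by blast
    define a where "a = A $ i0"
    define t where "t = \<bar>b $ i0 - a \<bullet> p\<bar> + 1"
    define y where "y = p + t *\<^sub>R a"
    have aa: "a \<bullet> a = 1" using rows unfolding a_def by (metis norm_eq_1)
    have "a \<bullet> y - b $ i0 \<ge> 1" unfolding y_def t_def using aa by (simp add: inner_add_right)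
    then have "res y i0 \<ge> 1" unfolding res_def a_def by simp
    then have dy: "infdist y P \<ge> 1" using res_le_d[of y i0] by simp
    have "0 \<le> (\<integral>\<tau>. (infdist (step y \<tau>) P)\<^sup>2 \<partial>mu)" by simp
    also have "\<dots> \<le> h * (infdist y P)\<^sup>2" using E_dist_sq[of y] hexp by simp
    finally have "0 \<le> h * (infdist y P)\<^sup>2" .
    moreover have "(infdist y P)\<^sup>2 > 0" using dy by simp
    ultimately show ?thesis by (simp add: zero_le_mult_iff)
  qed
  have P1: "\<Pi>1 \<ge> 0" "\<Pi>1 \<le> 1" using assms(7) h0 h1 by auto
  have P2: "\<Pi>2 \<ge> 0" using assms(8) by simp
  have cnn: "c \<ge> 0" unfolding c_def using delta mu2pos by simp
  have cpos: "c > 0" unfolding c_def using delta mu2pos by simp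
  have P3: "\<Pi>3 = c * \<Pi>1" unfolding c_def using assms(9,7) by (simp add: real_sqrt_mult)
  have P4: "\<Pi>4 = \<Pi>2 + c * \<Pi>2" unfolding c_def using assms(10,8) by (simp add: algebra_simps)
  have P3nn: "\<Pi>3 \<ge> 0" using P3 cnn P1 by simp
  have P4nn: "\<Pi>4 \<ge> 0" using P4 cnn P2 by simp
  have Dnn: "D \<ge> 0" using assms(11) P2 P3nn by simp
  have sh: "sqrt h = \<Pi>1" using assms(7) by simp
  have smu: "sqrt (min 1 (real \<beta> / real CARD('m) * lambda_max (transpose A ** A))) = sqrt \<mu>2"
    using assms(4) defm by simp
  have ru: "uu \<xi> x0 (Suc k) \<le> \<Pi>1 * uu \<xi> x0 k + \<Pi>2 * ee \<xi> x0 k" for k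
    using R1[of \<xi> x0 k] hexp assms(7,8) by simp
  have re: "ee \<xi> x0 (Suc k) \<le> \<Pi>3 * uu \<xi> x0 k + \<Pi>4 * ee \<xi> x0 k" for k
  proof -
    have "ee \<xi> x0 (Suc k) \<le> \<Pi>2 * ee \<xi> x0 k + c * uu \<xi> x0 (Suc k)"
      using R2[of \<xi> x0 k] smu assms(8) unfolding c_def by simp
    also have "c * uu \<xi> x0 (Suc k) \<le> c * (\<Pi>1 * uu \<xi> x0 k + \<Pi>2 * ee \<xi> x0 k)"
      using ru[of k] cnn by (rule mult_left_mono)
    finally show ?thesis using P3 P4 by (simp add: algebra_simps)
  qed
  have rb: "uu \<xi> x0 k \<le> fst (seqAE \<Pi>1 \<Pi>2 \<Pi>3 \<Pi>4 k) * d \<and> ee \<xi> x0 k \<le> snd (seqAE \<Pi>1 \<Pi>2 \<Pi>3 \<Pi>4 k) * d" for k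
    by (rule rec_bound[OF P1(1) P2 P3nn P4nn d0]) (use ru re uu_0 ee_0 d_def in auto)
  have Dge: "D \<ge> (\<Pi>1 - \<Pi>4)\<^sup>2" using assms(11) P2 P3nn by simp
  have sD1: "sqrt D \<ge> \<bar>\<Pi>1 - \<Pi>4\<bar>"
    using real_sqrt_le_mono[OF Dge] by simp
  have key: "\<Pi>1 * \<Pi>4 - \<Pi>2 * \<Pi>3 = \<Pi>1 * \<Pi>2" using P3 P4 by (simp add: algebra_simps)
  have Dle: "D \<le> (\<Pi>1 + \<Pi>4)\<^sup>2"
  proof -
    have "(\<Pi>1 + \<Pi>4)\<^sup>2 - D = 4 * (\<Pi>1 * \<Pi>4 - \<Pi>2 * \<Pi>3)" using assms(11) by (simp add: power2_eq_square algebra_simps)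
    then show ?thesis using key mult_nonneg_nonneg[OF P1(1) P2] by simp
  qed
  have sD2: "sqrt D \<le> \<Pi>1 + \<Pi>4"
    using real_sqrt_le_mono[OF Dle] P1 P4nn by simp
  have condP: "(1 - \<Pi>2) * \<Pi>1 + \<Pi>4 < 1"
  proof -
    have "\<Pi>2 = - \<xi>" using assms(8) xi by simp
    then show ?thesis using cond assms(7,10) xi by (simp add: algebra_simps)
  qed
  have xi1: "\<Pi>2 < 1" using assms(8) xi by simp
  have tr: "\<Pi>1 + \<Pi>4 < 2"
  proof -
    have "\<Pi>2 * \<Pi>1 \<le> 1" using P1 P2 xi1 by (metis less_eq_real_def mult_le_one)
    then show ?thesis using condP by (simp add: algebra_simps)
  qed
  have Dlt: "D < (2 - \<Pi>1 - \<Pi>4)\<^sup>2"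
  proof -
    have "(2 - \<Pi>1 - \<Pi>4)\<^sup>2 - D = 4 * (1 - \<Pi>1 - \<Pi>4 + (\<Pi>1 * \<Pi>4 - \<Pi>2 * \<Pi>3))"
      using assms(11) by (simp add: power2_eq_square algebra_simps)
    also have "\<dots> = 4 * (1 - \<Pi>1 - \<Pi>4 + \<Pi>1 * \<Pi>2)" using key by simp
    finally show ?thesis using condP by (simp add: algebra_simps)
  qed
  have sD3: "sqrt D < 2 - \<Pi>1 - \<Pi>4"
    using real_sqrt_less_mono[OF Dlt] tr by simp
  have rho1: "0 \<le> \<rho>1" using assms(15) sD2 by simp
  have rho12: "\<rho>1 \<le> \<rho>2" 
  proof -
    have "\<rho>2 - \<rho>1 = sqrt D" using assms(15,16) by (simp add: field_simps)
    moreover have "sqrt D \<ge> 0" using Dnn by simp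
    ultimately show ?thesis by linarith
  qed
  have rho2: "\<rho>2 < 1" using assms(16) sD3 by simp
  have sDnn: "sqrt D \<ge> 0" using Dnn by simp
  have G3: "\<Gamma>3 \<ge> 0" unfolding assms(14) using P3nn sDnn by (rule divide_nonneg_nonneg)
  have G1: "\<Gamma>1 \<ge> 0"
  proof -
    have "\<Pi>1 - \<Pi>4 + sqrt D \<ge> 0" using sD1 by simp
    then show ?thesis unfolding assms(12) using P3nn by simp
  qed
  have bounds: "uu \<xi> x0 k \<le> (- \<Gamma>2 * \<Gamma>3 * \<rho>1 ^ k + \<Gamma>1 * \<Gamma>3 * \<rho>2 ^ k) * d
              \<and> ee \<xi> x0 k \<le> (- \<Gamma>3 * \<rho>1 ^ k + \<Gamma>3 * \<rho>2 ^ k) * d" if k1: "k \<ge> 1" for k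
  proof (cases "\<Pi>3 > 0")
    case True
    have Dpos: "D > 0"
    proof (cases "\<Pi>2 > 0")
      case True
      then have "4 * \<Pi>2 * \<Pi>3 > 0" using \<open>\<Pi>3 > 0\<close> by simp
      then show ?thesis using assms(11) by (smt (verit) zero_le_power2)
    next
      case False
      then have "\<Pi>2 = 0" using P2 by simp
      then have "\<Pi>4 = 0" "\<Pi>1 > 0" using P4 P3 \<open>\<Pi>3 > 0\<close> P1 by (auto simp: zero_less_mult_iff)
      then show ?thesis using assms(11) \<open>\<Pi>2 = 0\<close> by simp
    qed
    have sq: "seqAE \<Pi>1 \<Pi>2 \<Pi>3 \<Pi>4 k = (\<Gamma>3 * (\<Gamma>1 * \<rho>2 ^ k - \<Gamma>2 * \<rho>1 ^ k), \<Gamma>3 * (\<rho>2 ^ k - \<rho>1 ^ k))"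
      using seqAE_closed[OF True assms(11) Dpos, of k, folded assms(12-16)] .
    show ?thesis using rb[of k] unfolding sq by (simp add: algebra_simps)
  next
    case False
    then have p3: "\<Pi>3 = 0" using P3nn by simp
    then have p1: "\<Pi>1 = 0" using P3 cpos by simp
    have sq: "seqAE \<Pi>1 \<Pi>2 \<Pi>3 \<Pi>4 k = (0, 0)" by (rule seqAE_zero[OF p1 p3 k1])
    have "\<Gamma>1 = 0" "\<Gamma>2 = 0" "\<Gamma>3 = 0" using assms(12,13,14) p3 by simp_all
    then show ?thesis using rb[of k] unfolding sq by simp
  qed
  have xX: "x (Suc k) \<omega> = XX \<xi> x0 k \<omega>" for k \<omega>
    using assms(18) unfolding gskm_x_def XX_def pr_def by simp
  have zZ: "z k \<omega> = ZZ \<xi> x0 k \<omega>" for k \<omega>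
    using assms(19) unfolding gskm_z_def ZZ_def pr_def by simp
  have MMeq: "M = MM" using assms(17) unfolding gskm_space_def by simp
  have part2: "\<forall>k\<ge>1. (\<integral>\<omega>. infdist (x (k + 1) \<omega>) P \<partial>M)
              \<le> (- \<Gamma>2 * \<Gamma>3 * \<rho>1 ^ k + \<Gamma>1 * \<Gamma>3 * \<rho>2 ^ k) * infdist x0 P"
    using bounds unfolding MMeq uu_def d_def by (simp add: xX)
  have part3: "\<forall>k\<ge>1. (\<integral>\<omega>. norm (z (k + 1) \<omega> - z k \<omega>) \<partial>M)
              \<le> (- \<Gamma>3 * \<rho>1 ^ k + \<Gamma>3 * \<rho>2 ^ k) * infdist x0 P"
    using bounds unfolding MMeq ee_def d_def by (simp add: zZ)
  have eeb: "ee \<xi> x0 k \<le> \<Gamma>3 * d * \<rho>2 ^ k" for k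
  proof (cases "k \<ge> 1")
    case True
    have "\<Gamma>3 * \<rho>1 ^ k * d \<ge> 0" using G3 rho1 d0 by simp
    then show ?thesis using bounds[OF True] by (simp add: algebra_simps)
  next
    case False
    then have "k = 0" by simp
    then show ?thesis using ee_0 G3 d0 by simp
  qed
  define s where "s k \<omega> = norm (ZZ \<xi> x0 (Suc k) \<omega> - ZZ \<xi> x0 k \<omega>)" for k \<omega>
  have fs: "fdep (Suc (Suc (Suc k))) (s k)" for k
    unfolding s_def by (rule fdep_comp2[OF fdep_ZZ fdep_mono[OF fdep_ZZ]]) simp
  have [measurable]: "s k \<in> borel_measurable MM" for k by (rule fdep_meas[OF fs])
  have sumfin: "(\<integral>\<^sup>+\<omega>. (\<Sum>k. ennreal (s k \<omega>)) \<partial>MM) \<noteq> \<infinity>"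
  proof -
    have "(\<integral>\<^sup>+\<omega>. (\<Sum>k. ennreal (s k \<omega>)) \<partial>MM) = (\<Sum>k. \<integral>\<^sup>+\<omega>. ennreal (s k \<omega>) \<partial>MM)"
      by (rule nn_integral_suminf) measurable
    also have "\<dots> = (\<Sum>k. ennreal (ee \<xi> x0 k))"
    proof (intro suminf_cong)
      fix k
      have "(\<integral>\<^sup>+\<omega>. ennreal (s k \<omega>) \<partial>MM) = ennreal (\<integral>\<omega>. s k \<omega> \<partial>MM)"
        by (rule nn_integral_eq_integral[OF intg[OF fs]]) (simp add: s_def)
      also have "(\<integral>\<omega>. s k \<omega> \<partial>MM) = ee \<xi> x0 k" unfolding ee_def s_def ..
      finally show "(\<integral>\<^sup>+\<omega>. ennreal (s k \<omega>) \<partial>MM) = ennreal (ee \<xi> x0 k)" .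
    qed
    also have "\<dots> \<le> (\<Sum>k. ennreal (\<Gamma>3 * d * \<rho>2 ^ k))"
      by (intro suminf_le summableI) (use eeb in \<open>auto intro: ennreal_leI\<close>)
    also have "\<dots> = ennreal (\<Sum>k. \<Gamma>3 * d * \<rho>2 ^ k)"
      by (rule suminf_ennreal2) (use G3 d0 rho1 rho12 rho2 in \<open>auto intro!: summable_mult summable_geometric\<close>)
    finally show ?thesis by (auto simp: top_unique)
  qed
  have AEfin: "AE \<omega> in MM. (\<Sum>k. ennreal (s k \<omega>)) \<noteq> \<infinity>"
    by (rule nn_integral_noteq_infinite[OF _ sumfin]) measurable
  have conv: "convergent (\<lambda>k. x k \<omega>)" if sm: "summable (\<lambda>k. s k \<omega>)" for \<omega>
  proof -
    let ?Z = "\<lambda>n. ZZ \<xi> x0 n \<omega>"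
    have "summable (\<lambda>k. ?Z (Suc k) - ?Z k)"
      using sm unfolding s_def by (rule summable_norm_cancel)
    then have "(\<lambda>n. \<Sum>k<n. ?Z (Suc k) - ?Z k) \<longlonglongrightarrow> (\<Sum>k. ?Z (Suc k) - ?Z k)"
      by (rule summable_LIMSEQ)
    then have "(\<lambda>n. ?Z n - ?Z 0) \<longlonglongrightarrow> (\<Sum>k. ?Z (Suc k) - ?Z k)"
    proof -
      have "(\<Sum>k<n. ?Z (Suc k) - ?Z k) = ?Z n - ?Z 0" for n
        by (rule sum_lessThan_telescope)
      then show "(\<lambda>n. \<Sum>k<n. ?Z (Suc k) - ?Z k) \<longlonglongrightarrow> (\<Sum>k. ?Z (Suc k) - ?Z k) \<Longrightarrow> (\<lambda>n. ?Z n - ?Z 0) \<longlonglongrightarrow> (\<Sum>k. ?Z (Suc k) - ?Z k)"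
        by simp
    qed
    then have "(\<lambda>n. (?Z n - ?Z 0) + ?Z 0) \<longlonglongrightarrow> (\<Sum>k. ?Z (Suc k) - ?Z k) + ?Z 0"
      by (intro tendsto_intros)
    then have Zl: "?Z \<longlonglongrightarrow> (\<Sum>k. ?Z (Suc k) - ?Z k) + ?Z 0" by simp
    define l where "l = (\<Sum>k. ?Z (Suc k) - ?Z k) + ?Z 0"
    have Zl': "?Z \<longlonglongrightarrow> l" using Zl unfolding l_def .
    have "(\<lambda>n. (1 - \<xi>) *\<^sub>R ?Z (Suc n) + \<xi> *\<^sub>R ?Z n) \<longlonglongrightarrow> (1 - \<xi>) *\<^sub>R l + \<xi> *\<^sub>R l"
      by (intro tendsto_intros LIMSEQ_Suc Zl')
    moreover have "(1 - \<xi>) *\<^sub>R l + \<xi> *\<^sub>R l = l" by (simp add: algebra_simps)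
    moreover have "XX \<xi> x0 (Suc n) \<omega> = (1 - \<xi>) *\<^sub>R ?Z (Suc n) + \<xi> *\<^sub>R ?Z n" for n
      by (simp add: XX_Suc ZZ_Suc)
    ultimately have "(\<lambda>n. XX \<xi> x0 (Suc n) \<omega>) \<longlonglongrightarrow> l" by simp
    then have "(\<lambda>n. XX \<xi> x0 n \<omega>) \<longlonglongrightarrow> l" by (rule LIMSEQ_imp_Suc)
    then have "(\<lambda>n. x (Suc n) \<omega>) \<longlonglongrightarrow> l" by (simp add: xX)
    then have "convergent (\<lambda>n. x (Suc n) \<omega>)" by (auto simp: convergent_def)
    then show ?thesis using convergent_Suc_iff[of "\<lambda>k. x k \<omega>"] by simp
  qed
  have part1: "AE \<omega> in M. convergent (\<lambda>k. x k \<omega>)"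
    unfolding MMeq using AEfin
  proof (rule eventually_mono)
    fix \<omega> assume "(\<Sum>k. ennreal (s k \<omega>)) \<noteq> \<infinity>"
    then have "summable (\<lambda>k. s k \<omega>)" by (intro summable_suminf_not_top) (auto simp: s_def)
    then show "convergent (\<lambda>k. x k \<omega>)" by (rule conv)
  qed
  show ?thesis using part1 part2 part3 G1 G3 rho1 rho12 rho2 by blast
qed


end
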